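(* Let $\mathfrak n$ be a finite-dimensional real two-step nilpotent Lie algebra with center $\mathfrak z$, and let $n=\dim\mathfrak n-\dim\mathfrak z$. If $n\ge3$ and $2\dim[\mathfrak n,\mathfrak n]=n(n-1)$, then $\mathfrak n$ does not admit an abelian complex structure. In particular, free two-step nilpotent Lie algebras of rank $n\ge3$ (those with $\mathfrak z=[\mathfrak n,\mathfrak n]$ and $2\dim\mathfrak z=n(n-1)$) admit no abelian complex structure.
   Context: An abelian complex structure on a real Lie algebra $\mathfrak g$ is a linear map $J$ with $J^2=-\mathrm{Id}$ and $[Jx,Jy]=[x,y]$ for all $x,y\in\mathfrak g$. *)

theory Defs
  imports "HOL-Analysis.Analysis"
begin

definition lie_algebra :: "('a::euclidean_space \<Rightarrow> 'a \<Rightarrow> 'a) \<Rightarrow> bool" where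
  "lie_algebra br \<longleftrightarrow> bilinear br \<and> (\<forall>x. br x x = 0) \<and>
     (\<forall>x y z. br x (br y z) + br y (br z x) + br z (br x y) = 0)"

definition lie_center :: "('a::euclidean_space \<Rightarrow> 'a \<Rightarrow> 'a) \<Rightarrow> 'a set" where
  "lie_center br = {z. \<forall>x. br z x = 0}"

definition derived_algebra :: "('a::euclidean_space \<Rightarrow> 'a \<Rightarrow> 'a) \<Rightarrow> 'a set" where
  "derived_algebra br = span {br x y | x y. True}"

definition two_step_nilpotent :: "('a::euclidean_space \<Rightarrow> 'a \<Rightarrow> 'a) \<Rightarrow> bool" where
  "two_step_nilpotent br \<longleftrightarrow> lie_algebra br \<and> (\<forall>x y z. br x (br y z) = 0) \<and>
     (\<exists>x y. br x y \<noteq> 0)"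

definition abelian_complex_structure ::
  "('a::euclidean_space \<Rightarrow> 'a \<Rightarrow> 'a) \<Rightarrow> ('a \<Rightarrow> 'a) \<Rightarrow> bool" where
  "abelian_complex_structure br J \<longleftrightarrow> linear J \<and> (\<forall>x. J (J x) = - x) \<and>
     (\<forall>x y. br (J x) (J y) = br x y)"

end

theory Submission
  imports Defs
begin

lemma bil_span:
  fixes br :: "'a::euclidean_space \<Rightarrow> 'a \<Rightarrow> 'a"
  assumes bl: "bilinear br" and T: "subspace T"
    and gen: "\<And>u v. u \<in> A \<Longrightarrow> v \<in> A \<Longrightarrow> br u v \<in> T"
    and u: "u \<in> span A" and v: "v \<in> span A"
  shows "br u v \<in> T"
proof -
  have inner: "br u' v \<in> T" if "u' \<in> A" for u'
  proof -
    have lin: "linear (br u')" using bl unfolding bilinear_def by blast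
    have "br u' v \<in> br u' ` span A" using v by blast
    also have "\<dots> = span (br u' ` A)" using span_linear_image[OF lin] by simp
    also have "\<dots> \<subseteq> T" using span_minimal[OF _ T] gen that by blast
    finally show ?thesis .
  qed
  have lin: "linear (\<lambda>x. br x v)" using bl unfolding bilinear_def by blast
  have "br u v \<in> (\<lambda>x. br x v) ` span A" using u by blast
  also have "\<dots> = span ((\<lambda>x. br x v) ` A)" using span_linear_image[OF lin] by simp
  also have "\<dots> \<subseteq> T" by (rule span_minimal[OF _ T]) (auto intro: inner)
  finally show ?thesis .
qed

lemma J_step:
  fixes J :: "'a::euclidean_space \<Rightarrow> 'a"
  assumes lin: "linear J" and JJ: "\<And>x. J (J x) = - x"
    and inv: "J ` G \<subseteq> span G" and y: "y \<notin> span G"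
  shows "J y \<notin> span (insert y G)"
proof
  assume "J y \<in> span (insert y G)"
  then obtain k where m: "J y - k *\<^sub>R y \<in> span G" using span_breakdown_eq by blast
  define m where "m = J y - k *\<^sub>R y"
  have invs: "J ` span G \<subseteq> span G"
    using span_linear_image[OF lin, of G] span_minimal[OF inv subspace_span] by simp
  have Jm: "J m \<in> span G" using invs m m_def by blast
  have e1: "J m = - y - k *\<^sub>R J y" unfolding m_def using JJ linear_diff[OF lin] linear_scale[OF lin] by simp
  have e2: "J y = m + k *\<^sub>R y" unfolding m_def by simp
  have "- J m - k *\<^sub>R m = y + k *\<^sub>R J y - k *\<^sub>R m" using e1 by simp
  also have "\<dots> = (1 + k^2) *\<^sub>R y" unfolding e2 by (simp add: algebra_simps power2_eq_square)
  finally have "(1 + k^2) *\<^sub>R y = - J m - k *\<^sub>R m" by simp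
  moreover have "- J m - k *\<^sub>R m \<in> span G" using Jm m m_def
    by (simp add: span_diff span_neg span_scale)
  ultimately have "(1 + k^2) *\<^sub>R y \<in> span G" by simp
  hence "(inverse (1 + k^2)) *\<^sub>R ((1 + k^2) *\<^sub>R y) \<in> span G" by (rule span_scale)
  moreover have "1 + k^2 \<noteq> 0" by (metis add_pos_nonneg zero_less_one zero_le_power2 less_irrefl)
  ultimately have "y \<in> span G" by simp
  with y show False by simp
qed

lemma card_pairs: "2 * card {(i::nat, j). i < j \<and> j < n} = n * (n - 1)"
proof (induction n)
  case 0 then show ?case by simp
next
  case (Suc n)
  have eq: "{(i::nat, j). i < j \<and> j < Suc n} = {(i, j). i < j \<and> j < n} \<union> (\<lambda>i. (i, n)) ` {..<n}"
    by auto
  have fin: "finite {(i::nat, j). i < j \<and> j < n}"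
    by (rule finite_subset[of _ "{..<n} \<times> {..<n}"]) auto
  have "card {(i::nat, j). i < j \<and> j < Suc n} = card {(i, j). i < j \<and> j < n} + n"
    unfolding eq by (subst card_Un_disjoint) (auto simp: fin card_image inj_on_def)
  then show ?case using Suc by (cases n) (auto simp: algebra_simps)
qed

lemma not_univ:
  fixes S :: "'a::euclidean_space set"
  assumes "dim S < DIM('a)"
  shows "\<exists>x. x \<notin> span S"
proof (rule ccontr)
  assume "\<not> ?thesis"
  hence "span S = UNIV" by auto
  hence "dim S = DIM('a)" by (metis dim_UNIV dim_span)
  with assms show False by simp
qed

theorem mainTheorem14:
  fixes br :: "'a::euclidean_space \<Rightarrow> 'a \<Rightarrow> 'a" and n :: nat
  assumes "two_step_nilpotent br"
    and "n = DIM('a) - dim (lie_center br)"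
    and "n \<ge> 3"
    and "2 * dim (derived_algebra br) = n * (n - 1)"
  shows "\<not> (\<exists>J. abelian_complex_structure br J)"
proof
  assume "\<exists>J. abelian_complex_structure br J"
  then obtain J where lin: "linear J" and JJ: "\<And>x. J (J x) = - x"
    and JB: "\<And>x y. br (J x) (J y) = br x y"
    unfolding abelian_complex_structure_def by blast
  have bl: "bilinear br" and alt: "\<And>x. br x x = 0"
    using assms(1) unfolding two_step_nilpotent_def lie_algebra_def by auto
  have anti: "br u v = - br v u" for u v
  proof -
    have "0 = br (u + v) (u + v)" using alt by simp
    also have "\<dots> = br u u + br u v + br v u + br v v"
      by (simp add: bilinear_ladd[OF bl] bilinear_radd[OF bl])
    finally show ?thesis using alt by (simp add: eq_neg_iff_add_eq_0)
  qed
  define Z where "Z = lie_center br"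
  have subZ: "subspace Z" unfolding Z_def lie_center_def subspace_def
    by (simp add: bilinear_ladd[OF bl] bilinear_lmul[OF bl] bilinear_lzero[OF bl])
  have JZ: "J ` Z \<subseteq> span Z"
  proof
    fix w assume "w \<in> J ` Z"
    then obtain z where z: "z \<in> Z" "w = J z" by blast
    have "br (J z) x = 0" for x
    proof -
      have "br (J z) x = br (J (J z)) (J x)" by (simp add: JB)
      also have "\<dots> = - br z (J x)" by (simp add: JJ bilinear_lneg[OF bl])
      finally show ?thesis using z unfolding Z_def lie_center_def by simp
    qed
    then have "J z \<in> Z" unfolding Z_def lie_center_def by simp
    then show "w \<in> span Z" using z span_base by auto
  qed
  have nZ: "n = DIM('a) - dim Z" using assms(2) Z_def by simp
  obtain x where x: "x \<notin> span Z" using not_univ[of Z] nZ assms(3) by force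
  have Jx: "J x \<notin> span (insert x Z)" by (rule J_step[OF lin JJ JZ x])
  define G2 where "G2 = insert (J x) (insert x Z)"
  have dG2: "dim G2 = dim Z + 2" unfolding G2_def using x Jx by (simp add: dim_insert)
  have JG2: "J ` G2 \<subseteq> span G2"
  proof -
    have "J ` Z \<subseteq> span G2" using JZ span_mono[of Z G2] unfolding G2_def by blast
    moreover have "J (J x) \<in> span G2" unfolding G2_def JJ
      by (simp add: span_neg span_base)
    moreover have "J x \<in> span G2" unfolding G2_def by (simp add: span_base)
    ultimately show ?thesis unfolding G2_def by auto
  qed
  obtain y where y: "y \<notin> span G2" using not_univ[of G2] dG2 nZ assms(3) by force
  have Jy: "J y \<notin> span (insert y G2)" by (rule J_step[OF lin JJ JG2 y])
  define G4 where "G4 = insert (J y) (insert y G2)"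
  have dG4: "dim G4 = dim Z + 4" unfolding G4_def using y Jy dG2 by (simp add: dim_insert)
  have "dim G4 \<le> DIM('a)" by (metis dim_UNIV dim_subset subset_UNIV)
  hence n4: "n \<ge> 4" and n4': "DIM('a) - dim G4 = n - 4" using dG4 nZ by auto
  obtain B' where B': "B' \<subseteq> G4" "independent B'" "G4 \<subseteq> span B'" "card B' = dim G4"
    using basis_exists by blast
  obtain B where B: "B' \<subseteq> B" "independent B" "UNIV \<subseteq> span B"
    using maximal_independent_subset_extend[of B' UNIV] B' by auto
  have finB: "finite B" using B independent_bound by blast
  have cB: "card B = DIM('a)"
    using dim_eq_card_independent[OF B(2)] B(3) by (metis dim_UNIV dim_span span_span top.extremum_uniqueI)
  define R where "R = B - B'"
  have cR: "card R = n - 4" unfolding R_def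
    using card_Diff_subset[of B' B] B(1) finB finite_subset[OF B(1)] cB B'(4) n4' by simp
  obtain rs where rs: "set rs = R" "distinct rs" using finite_distinct_list[of R] finB R_def by auto
  define es where "es = [x, J x, y, J y] @ rs"
  have les: "length es = n" unfolding es_def using rs cR distinct_card[of rs] n4 by simp
  define A where "A = set es \<union> Z"
  have spanA: "span A = UNIV"
  proof -
    have "G4 \<union> R \<subseteq> span A" unfolding A_def G4_def G2_def es_def using rs
      by (auto intro: span_base)
    hence "B \<subseteq> span A" using B'(1) unfolding R_def by blast
    hence "span B \<subseteq> span A" by (simp add: span_minimal)
    with B(3) show ?thesis by auto
  qed
  define P where "P = {(i::nat, j). i < j \<and> j < n}"
  define f where "f = (\<lambda>(i, j). br (es ! i) (es ! j))"
  define S where "S = f ` P"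
  have finP: "finite P" unfolding P_def
    by (rule finite_subset[of _ "{..<n} \<times> {..<n}"]) auto
  have gen: "br u v \<in> span S" if uvA: "u \<in> A" "v \<in> A" for u v
  proof -
    consider "u \<in> Z" | "v \<in> Z" | "u \<in> set es" "v \<in> set es" using uvA unfolding A_def by blast
    then show ?thesis
    proof cases
      case 1 then show ?thesis unfolding Z_def lie_center_def by (simp add: span_zero)
    next
      case 2 then show ?thesis using anti[of u v] unfolding Z_def lie_center_def by (simp add: span_zero)
    next
      case 3
      obtain i where i: "i < n" "u = es ! i" using 3(1) les by (auto simp: in_set_conv_nth)
      obtain j where j: "j < n" "v = es ! j" using 3(2) les by (auto simp: in_set_conv_nth)
      note ij = i j
      consider "i < j" | "i = j" | "j < i" by linarith
      then show ?thesis
      proof cases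
        case 1 then have "(i, j) \<in> P" unfolding P_def using ij by simp
        hence "f (i, j) \<in> S" unfolding S_def by (rule imageI)
        hence "br u v \<in> S" unfolding f_def using ij by simp
        then show ?thesis by (rule span_base)
      next
        case 2 then show ?thesis using ij alt by (simp add: span_zero)
      next
        case 3 then have "(j, i) \<in> P" unfolding P_def using ij by simp
        hence "f (j, i) \<in> S" unfolding S_def by (rule imageI)
        hence "br v u \<in> S" unfolding f_def using ij by simp
        then show ?thesis using anti[of u v] by (simp add: span_base span_neg)
      qed
    qed
  qed
  have "derived_algebra br \<subseteq> span S"
    unfolding derived_algebra_def
    by (rule span_minimal) (auto intro!: bil_span[OF bl subspace_span gen] simp: spanA)
  hence d1: "dim (derived_algebra br) \<le> card S"
    using dim_le_card[of _ S] finP S_def by simp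
  have "f (0, 2) = f (1, 3)" unfolding f_def es_def by (simp add: JB)
  moreover have "(0, 2) \<in> P" "(1, 3) \<in> P" using n4 unfolding P_def by auto
  ultimately have "\<not> inj_on f P" by (metis inj_onD prod.inject zero_neq_one)
  hence "card S \<noteq> card P" unfolding S_def using inj_on_iff_eq_card[OF finP, of f] by blast
  hence "card S < card P" using card_image_le[OF finP, of f] S_def by simp
  hence "2 * dim (derived_algebra br) < 2 * card P" using d1 by simp
  also have "\<dots> = n * (n - 1)" unfolding P_def by (rule card_pairs)
  finally show False using assms(4) by simp
qed

end
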